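(* Let $X$ be a Banach space and $Y$ a normed space over $K$, $M>0$, $F:X\to Y$ a map, and $\{F_n\}$ a sequence of continuous $M$-contraction operators from $X$ into $Y$ such that $F_n(x)\to F(x)$ in norm for every $x\in X$. If there is a positive constant $L$ with $\|F_n(x_1+x_2)\|_Y\le L\|F_n(x_1)+F_n(x_2)\|_Y$ for every $n$ and all $x_1,x_2\in X$, then $\{F_n\}$ is uniformly norm bounded (there is $c>0$ with $\|F_n\|_{B(X,Y)}\le c$ for all $n$) and $F\in B(X,Y)$.
   Context: $K$ is $\mathbb{R}$ or $\mathbb{C}$; operators are arbitrary maps. $\|F\|_{B(X,Y)}=\max\left(\sup_{x\neq0,x\in X}\frac{\|F(x)\|_Y}{\|x\|_X},\ \|F(0)\|_Y\right)$ and $B(X,Y)$ is the set of maps with this finite. $F$ is an $M$-contraction operator if $\|F(kx)\|_Y\le M|k|\,\|F(x)\|_Y$ for every scalar $k\neq0$ and every $x\neq0$. *)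

theory Defs
  imports "HOL-Analysis.Analysis"
begin

definition complex_normed_scale :: "(complex \<Rightarrow> 'a::real_normed_vector \<Rightarrow> 'a) \<Rightarrow> bool" where
  "complex_normed_scale s \<longleftrightarrow>
     (\<forall>a x y. s a (x + y) = s a x + s a y) \<and>
     (\<forall>a b x. s (a + b) x = s a x + s b x) \<and>
     (\<forall>a b x. s a (s b x) = s (a * b) x) \<and>
     (\<forall>r x. s (complex_of_real r) x = r *\<^sub>R x) \<and>
     (\<forall>a x. norm (s a x) = cmod a * norm x)"

text \<open>The scalar field K is either R (embedded in C) with the real scaling,
or C with a complex normed-space structure.\<close>
definition scalar_field :: "complex set \<Rightarrow> (complex \<Rightarrow> 'a::real_normed_vector \<Rightarrow> 'a) \<Rightarrow> bool" where
  "scalar_field K s \<longleftrightarrow>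
     (K = \<real> \<and> s = (\<lambda>k x. Re k *\<^sub>R x)) \<or> (K = UNIV \<and> complex_normed_scale s)"

definition in_B :: "('a::real_normed_vector \<Rightarrow> 'b::real_normed_vector) \<Rightarrow> bool" where
  "in_B F \<longleftrightarrow> bdd_above {norm (F x) / norm x | x. x \<noteq> 0}"

definition B_norm :: "('a::real_normed_vector \<Rightarrow> 'b::real_normed_vector) \<Rightarrow> real" where
  "B_norm F = Sup (insert (norm (F 0)) {norm (F x) / norm x | x. x \<noteq> 0})"

definition M_contraction ::
  "complex set \<Rightarrow> (complex \<Rightarrow> 'a::real_normed_vector \<Rightarrow> 'a) \<Rightarrow> real \<Rightarrow> ('a \<Rightarrow> 'b::real_normed_vector) \<Rightarrow> bool" where
  "M_contraction K s M F \<longleftrightarrow>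
     (\<forall>k\<in>K. \<forall>x. k \<noteq> 0 \<longrightarrow> x \<noteq> 0 \<longrightarrow> norm (F (s k x)) \<le> M * cmod k * norm (F x))"

end

theory Submission
  imports Defs
begin

theorem corollary1:
  fixes K :: "complex set"
    and sX :: "complex \<Rightarrow> 'a::banach \<Rightarrow> 'a"
    and sY :: "complex \<Rightarrow> 'b::real_normed_vector \<Rightarrow> 'b"
    and M L :: real
    and F :: "'a \<Rightarrow> 'b"
    and Fn :: "nat \<Rightarrow> 'a \<Rightarrow> 'b"
  assumes "scalar_field K sX" and "scalar_field K sY"
    and "M > 0"
    and "\<And>n. continuous_on UNIV (Fn n)"
    and "\<And>n. M_contraction K sX M (Fn n)"
    and "\<And>x. (\<lambda>n. Fn n x) \<longlonglongrightarrow> F x"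
    and "L > 0"
    and "\<And>n x1 x2. norm (Fn n (x1 + x2)) \<le> L * norm (Fn n x1 + Fn n x2)"
  shows "(\<exists>c>0. \<forall>n. in_B (Fn n) \<and> B_norm (Fn n) \<le> c) \<and> in_B F"
proof -
  have sreal: "sX (complex_of_real r) x = r *\<^sub>R x \<and> complex_of_real r \<in> K" for r x
    using assms(1) unfolding scalar_field_def complex_normed_scale_def by auto
  have hom: "norm (Fn n (r *\<^sub>R x)) \<le> M * \<bar>r\<bar> * norm (Fn n x)" if "r \<noteq> 0" "x \<noteq> 0" for n r x
    using assms(5)[of n] sreal[of r x] that unfolding M_contraction_def by force
  have pb: "\<exists>B>0. \<forall>n. norm (Fn n x) \<le> B" for x
    using convergent_imp_Bseq[OF convergentI[OF assms(6)[of x]]] unfolding Bseq_def by blast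
  define A where "A m = {x. \<forall>n. norm (Fn n x) \<le> real m}" for m :: nat
  have clA: "closed (A m)" for m
    unfolding A_def
    by (intro closed_Collect_all closed_Collect_le continuous_on_norm assms(4) continuous_on_const)
  have unA: "\<Union>(range A) = UNIV"
  proof (rule set_eqI, rule iffI)
    fix x
    show "x \<in> \<Union>(range A) \<Longrightarrow> x \<in> UNIV" by simp
  next
    fix x
    obtain B where "B > 0" "\<forall>n. norm (Fn n x) \<le> B" using pb by blast
    moreover obtain m :: nat where "B \<le> real m" using real_arch_simple by blast
    ultimately have "x \<in> A m" unfolding A_def by (auto intro: order_trans)
    then show "x \<in> \<Union>(range A)" by blast
  qed
  have "\<exists>m. interior (A m) \<noteq> {}"
  proof (rule ccontr)
    assume "\<not> ?thesis"
    then have "euclidean interior_of \<Union>(range A) = {}"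
    proof (intro Baire_category_alt)
      show "completely_metrizable_space (euclidean :: 'a topology) \<or> locally_compact_space (euclidean :: 'a topology) \<and> regular_space (euclidean :: 'a topology)"
        using completely_metrizable_space_euclidean by blast
      show "countable (range A)" by simp
      fix T assume "T \<in> range A"
      then obtain m where "T = A m" by blast
      then show "closedin euclidean T \<and> euclidean interior_of T = {}"
        using clA[of m] \<open>\<not> (\<exists>m. interior (A m) \<noteq> {})\<close> by (simp add: closed_closedin[symmetric])
    qed
    then show False using unA by simp
  qed
  then obtain m x0 where "x0 \<in> interior (A m)" by blast
  then obtain r where r: "r > 0" "ball x0 r \<subseteq> A m"
    by (meson interior_subset open_contains_ball open_interior subset_trans)
  obtain B1 where B1: "B1 > 0" "\<forall>n. norm (Fn n (- x0)) \<le> B1" using pb by blast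
  define C where "C = L * (real m + B1)"
  have C0: "C \<ge> 0" unfolding C_def using assms(7) B1 by simp
  have small: "norm (Fn n y) \<le> C" if "norm y < r" for n y
  proof -
    have "x0 + y \<in> A m" using r that by (auto simp: dist_norm)
    then have a: "norm (Fn n (x0 + y)) \<le> real m" unfolding A_def by blast
    have "norm (Fn n y) = norm (Fn n ((x0 + y) + (- x0)))" by simp
    also have "\<dots> \<le> L * norm (Fn n (x0 + y) + Fn n (- x0))" by (rule assms(8))
    also have "\<dots> \<le> L * (real m + B1)"
      using a B1(2)[rule_format, of n] assms(7) norm_triangle_ineq[of "Fn n (x0 + y)" "Fn n (- x0)"]
      by (intro mult_left_mono) linarith+
    finally show ?thesis unfolding C_def .
  qed
  define D where "D = 2 * M * C / r"
  have D0: "D \<ge> 0" unfolding D_def using C0 r assms(3) by simp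
  have lin: "norm (Fn n x) \<le> D * norm x" if "x \<noteq> 0" for n x
  proof -
    define y where "y = (r / (2 * norm x)) *\<^sub>R x"
    have nx: "norm x > 0" using that by simp
    have ny: "norm y = r / 2" unfolding y_def using nx r by simp
    have "y \<noteq> 0" using ny r by auto
    have xy: "x = (2 * norm x / r) *\<^sub>R y" unfolding y_def using nx r by simp
    have "norm (Fn n x) \<le> M * \<bar>2 * norm x / r\<bar> * norm (Fn n y)"
      using hom[of "2 * norm x / r" y n] xy \<open>y \<noteq> 0\<close> nx r by simp
    also have "\<dots> \<le> M * \<bar>2 * norm x / r\<bar> * C"
      using small[of y n] ny r assms(3) by (intro mult_left_mono) auto
    also have "\<dots> = D * norm x" unfolding D_def using nx r by simp
    finally show ?thesis .
  qed
  have q: "norm (Fn n x) / norm x \<le> D" if "x \<noteq> 0" for n x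
    using lin[OF that, of n] that by (simp add: divide_le_eq)
  obtain B0 where B0: "B0 > 0" "\<forall>n. norm (Fn n 0) \<le> B0" using pb by blast
  have part1: "\<forall>n. in_B (Fn n) \<and> B_norm (Fn n) \<le> max D B0"
  proof
    fix n
    have "in_B (Fn n)" unfolding in_B_def bdd_above_def using q by blast
    moreover have "B_norm (Fn n) \<le> max D B0"
      unfolding B_norm_def using q B0
      by (intro cSup_least) (auto intro: order_trans max.coboundedI1 max.coboundedI2)
    ultimately show "in_B (Fn n) \<and> B_norm (Fn n) \<le> max D B0" by blast
  qed
  have "norm (F x) \<le> D * norm x" if "x \<noteq> 0" for x
    using LIMSEQ_le_const2[OF tendsto_norm[OF assms(6)[of x]]] lin[OF that] by blast
  then have "norm (F x) / norm x \<le> D" if "x \<noteq> 0" for x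
    using that by (simp add: divide_le_eq)
  then have "in_B F" unfolding in_B_def bdd_above_def by blast
  moreover have "max D B0 > 0" using B0 by simp
  ultimately show ?thesis using part1 by blast
qed

end
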